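(* Let $\Sigma\subset\mathbb{CH}^{n+1}$ be an $m$-dimensional submanifold that is $C^1$-asymptotically regular. If $m\ge2$ and $\Sigma$ is isotropic (i.e. the Kähler form $\omega_{\mathbb{CH}}(X,Y)=g_{\mathbb{CH}}(X,J_{\mathbb{CH}}Y)$ vanishes on $T\Sigma$), then $\Sigma$ is asymptotically horizontal.
   Context: Identify $\mathbb R^{2n+2}$ with $\mathbb C^{n+1}$ via $z_j=x_j+iy_j$; $r=|z|$; $\theta=r^{-2}\sum_j(x_jdy_j-y_jdx_j)$ on $\mathbb R^{2n+2}\setminus\{0\}$; $\mathbb B^{2n+2}$ the open unit ball, $\mathbb S^{2n+1}$ its boundary, $\hat\theta$ the pullback of $\theta$ to $\mathbb S^{2n+1}$; a submanifold $\Gamma\subset\mathbb S^{2n+1}$ is horizontal if $T_q\Gamma\subset\ker\hat\theta_q$ for all $q\in\Gamma$. $\mathbb{CH}^{n+1}$ is complex hyperbolic space (complete simply connected Kähler manifold of real dimension $2n+2$ with constant holomorphic sectional curvature, sectional curvatures in $[-4,-1]$), metric $g_{\mathbb{CH}}$, complex structure $J_{\mathbb{CH}}$. Bergman model: $\mathbb B^{2n+2}$ with $g_B=\frac{1}{1-r^2}\sum_jdz_jd\bar z_j+\frac{1}{(1-r^2)^2}\sum_{j,k}z_j\bar z_kdz_kd\bar z_j$ and the standard complex structure. For $p\in\mathbb{CH}^{n+1}$, $\Upsilon_p:\mathbb{CH}^{n+1}\to(\mathbb B^{2n+2},g_B)$ is an isometric biholomorphism with $\Upsilon_p(p)=0$,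 and $\Sigma_p=\overline{\Upsilon_p(\Sigma)}\subset\bar{\mathbb B}^{2n+2}$. $\Sigma$ is $C^l$-asymptotically regular if $\Sigma_p$ is a $C^l$ submanifold with boundary meeting $\partial\mathbb B^{2n+2}$ transversally; it is asymptotically horizontal if moreover $\partial\Sigma_p$ is a horizontal submanifold of $\mathbb S^{2n+1}$ (independent of choices). *)

theory Defs
  imports "HOL-Analysis.Analysis"
begin

text \<open>Model: complex hyperbolic space CH^{n+1} is taken in its Bergman model, the open unit
ball of complex^'n (CARD('n) = n+1), with the Bergman metric and the standard complex
structure (multiplication by i).  complex^'n is regarded as the real Euclidean space R^{2n+2}.\<close>

definition bergman_g :: "complex^'n \<Rightarrow> complex^'n \<Rightarrow> complex^'n \<Rightarrow> real" where
  "bergman_g z v w =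
     Re ((\<Sum>j\<in>UNIV. v$j * cnj (w$j)) / complex_of_real (1 - (norm z)^2)
       + (\<Sum>j\<in>UNIV. v$j * cnj (z$j)) * (\<Sum>k\<in>UNIV. z$k * cnj (w$k))
           / complex_of_real ((1 - (norm z)^2)^2))"

definition kaehler_form :: "complex^'n \<Rightarrow> complex^'n \<Rightarrow> complex^'n \<Rightarrow> real" where
  "kaehler_form z X Y = bergman_g z X (\<i> *s Y)"

text \<open>Isometric biholomorphisms of the Bergman ball (the maps Upsilon_p, p = inverse image of 0).\<close>
definition bergman_isom_biholo :: "(complex^'n \<Rightarrow> complex^'n) \<Rightarrow> bool" where
  "bergman_isom_biholo F \<longleftrightarrow>
     bij_betw F (ball 0 1) (ball 0 1) \<and>
     (\<forall>z\<in>ball 0 1. F differentiable (at z) \<and>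
        (\<forall>v. frechet_derivative F (at z) (\<i> *s v) = \<i> *s frechet_derivative F (at z) v) \<and>
        (\<forall>v w. bergman_g (F z) (frechet_derivative F (at z) v) (frechet_derivative F (at z) w)
               = bergman_g z v w))"

definition tangent_space :: "'e::real_normed_vector set \<Rightarrow> 'e \<Rightarrow> 'e set" where
  "tangent_space S q = {v. \<exists>\<gamma> e. 0 < e \<and> \<gamma> 0 = q \<and> (\<forall>t. \<bar>t\<bar> < e \<longrightarrow> \<gamma> t \<in> S) \<and>
                              (\<gamma> has_vector_derivative v) (at 0)}"

definition C1_chart :: "'e::euclidean_space set \<Rightarrow> (real^'m \<Rightarrow> 'e) \<Rightarrow> (real^'m \<Rightarrow> ((real^'m) \<Rightarrow>\<^sub>L 'e))
                        \<Rightarrow> (real^'m) set \<Rightarrow> bool" where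
  "C1_chart M \<phi> \<phi>' D \<longleftrightarrow>
     (\<exists>W. open W \<and> D \<subseteq> W \<and> (\<forall>u\<in>W. (\<phi> has_derivative blinfun_apply (\<phi>' u)) (at u)) \<and>
          continuous_on W \<phi>') \<and>
     (\<forall>u\<in>D. inj (blinfun_apply (\<phi>' u))) \<and>
     inj_on \<phi> D \<and> continuous_on (\<phi> ` D) (inv_into D \<phi>) \<and>
     (\<exists>V. open V \<and> \<phi> ` D = M \<inter> V)"

definition C1_submanifold :: "'m::finite itself \<Rightarrow> 'e::euclidean_space set \<Rightarrow> bool" where
  "C1_submanifold _ M \<longleftrightarrow>
     (\<forall>q\<in>M. \<exists>(\<phi>::real^'m \<Rightarrow> 'e) \<phi>' D. open D \<and> C1_chart M \<phi> \<phi>' D \<and> q \<in> \<phi> ` D)"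

definition bd_chart :: "'e::euclidean_space set \<Rightarrow> (real^'m \<Rightarrow> 'e) \<Rightarrow> (real^'m \<Rightarrow> ((real^'m) \<Rightarrow>\<^sub>L 'e))
                        \<Rightarrow> (real^'m) set \<Rightarrow> 'm \<Rightarrow> bool" where
  "bd_chart M \<phi> \<phi>' D k \<longleftrightarrow> (\<exists>U. open U \<and> D = U \<inter> {u. 0 \<le> u$k}) \<and> C1_chart M \<phi> \<phi>' D"

definition C1_bd_submanifold :: "'m::finite itself \<Rightarrow> 'e::euclidean_space set \<Rightarrow> bool" where
  "C1_bd_submanifold _ M \<longleftrightarrow>
     (\<forall>q\<in>M. \<exists>(\<phi>::real^'m \<Rightarrow> 'e) \<phi>' D k. bd_chart M \<phi> \<phi>' D k \<and> q \<in> \<phi> ` D)"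

definition manifold_boundary :: "'m::finite itself \<Rightarrow> 'e::euclidean_space set \<Rightarrow> 'e set" where
  "manifold_boundary _ M =
     {q. \<exists>(\<phi>::real^'m \<Rightarrow> 'e) \<phi>' D k u. bd_chart M \<phi> \<phi>' D k \<and> u \<in> D \<and> u$k = 0 \<and> \<phi> u = q}"

definition compactified :: "(complex^'n \<Rightarrow> complex^'n) \<Rightarrow> (complex^'n) set \<Rightarrow> (complex^'n) set" where
  "compactified F \<Sigma> = closure (F ` \<Sigma>)"

text \<open>C^1 asymptotic regularity w.r.t. a given choice of Upsilon: Sigma_p is a C^1
  submanifold with boundary, its boundary is Sigma_p \<inter> S^{2n+1}, and it meets the sphere
  transversally (the tangent space is not contained in the tangent hyperplane of the sphere).\<close>
definition asymp_regular_via :: "'m::finite itself \<Rightarrow> (complex^'n \<Rightarrow> complex^'n) \<Rightarrow> (complex^'n) set \<Rightarrow> bool" where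
  "asymp_regular_via mm F \<Sigma> \<longleftrightarrow>
     (let S = compactified F \<Sigma> in
       C1_bd_submanifold mm S \<and>
       manifold_boundary mm S = S \<inter> sphere 0 1 \<and>
       (\<forall>(\<phi>::real^'m \<Rightarrow> complex^'n) \<phi>' D k u.
          bd_chart S \<phi> \<phi>' D k \<and> u \<in> D \<and> \<phi> u \<in> sphere 0 1 \<longrightarrow>
          (\<exists>w. blinfun_apply (\<phi>' u) w \<bullet> \<phi> u \<noteq> 0)))"

definition asymptotically_regular :: "'m::finite itself \<Rightarrow> (complex^'n) set \<Rightarrow> bool" where
  "asymptotically_regular mm \<Sigma> \<longleftrightarrow> (\<exists>F. bergman_isom_biholo F \<and> asymp_regular_via mm F \<Sigma>)"

definition theta :: "complex^'n \<Rightarrow> complex^'n \<Rightarrow> real" where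
  "theta z v = (\<Sum>j\<in>UNIV. Re (z$j) * Im (v$j) - Im (z$j) * Re (v$j)) / (norm z)^2"

definition horizontal :: "(complex^'n) set \<Rightarrow> bool" where
  "horizontal \<Gamma> \<longleftrightarrow> \<Gamma> \<subseteq> sphere 0 1 \<and> (\<forall>q\<in>\<Gamma>. \<forall>v\<in>tangent_space \<Gamma> q. theta q v = 0)"

definition asymptotically_horizontal :: "'m::finite itself \<Rightarrow> (complex^'n) set \<Rightarrow> bool" where
  "asymptotically_horizontal mm \<Sigma> \<longleftrightarrow>
     (\<exists>F. bergman_isom_biholo F \<and> asymp_regular_via mm F \<Sigma> \<and>
          horizontal (manifold_boundary mm (compactified F \<Sigma>)))"

definition isotropic :: "(complex^'n) set \<Rightarrow> bool" where
  "isotropic \<Sigma> \<longleftrightarrow>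
     (\<forall>q\<in>\<Sigma>. \<forall>X\<in>tangent_space \<Sigma> q. \<forall>Y\<in>tangent_space \<Sigma> q. kaehler_form q X Y = 0)"

end

theory Submission
  imports Defs
begin


definition hA :: "complex^'n \<Rightarrow> complex^'n \<Rightarrow> complex" where
  "hA v w = (\<Sum>j\<in>UNIV. v$j * cnj (w$j))"

lemma Re_hA: "Re (hA v w) = inner v w"
  unfolding hA_def inner_vec_def inner_complex_def by (simp add: Re_sum)

lemma Im_hA: "Im (hA v w) = (\<Sum>j\<in>UNIV. Re (w$j) * Im (v$j) - Im (w$j) * Re (v$j))"
  unfolding hA_def by (simp add: Im_sum algebra_simps)

lemma theta_hA: "norm q = 1 \<Longrightarrow> theta q v = Im (hA v q)"
  unfolding theta_def Im_hA by simp

lemma hA_i: "hA X (\<i> *s Y) = - \<i> * hA X Y"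
  unfolding hA_def by (simp add: sum_distrib_left algebra_simps)

lemma hA_cnj: "hA w v = cnj (hA v w)"
  unfolding hA_def by (simp add: mult.commute)

lemma Re_mult_cnj: "Re (a * cnj a) \<ge> 0"
  by (simp add: complex_mult_cnj)

lemma bergman_g_alt: "bergman_g z v w = Re (hA v w) / (1 - (norm z)^2) + Re (hA v z * hA z w) / (1 - (norm z)^2)^2"
  unfolding bergman_g_def hA_def by (simp add: Re_divide_of_real)

lemma bergman_pos:
  assumes "norm z < 1" "v \<noteq> 0"
  shows "bergman_g z v v > 0"
proof -
  have "(norm z)^2 < 1^2" using assms(1) by (intro power_strict_mono) auto
  then have r: "1 - (norm z)^2 > 0" by simp
  have "Re (hA v v) > 0" using assms(2) by (simp add: Re_hA)
  then have a: "Re (hA v v) / (1 - (norm z)^2) > 0" using r by simp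
  have "Re (hA v z * hA z v) \<ge> 0" using Re_mult_cnj[of "hA v z"] by (simp add: hA_cnj[of z v])
  then have "Re (hA v z * hA z v) / (1 - (norm z)^2)^2 \<ge> 0" by simp
  with a show ?thesis unfolding bergman_g_alt by linarith
qed

definition kE :: "complex^'n \<Rightarrow> complex^'n \<Rightarrow> complex^'n \<Rightarrow> real" where
  "kE z X Y = (1 - (norm z)^2) * Re (hA X (\<i> *s Y)) + Re (hA X z * hA z (\<i> *s Y))"

lemma kaehler_kE:
  assumes "norm z \<noteq> 1"
  shows "kaehler_form z X Y = kE z X Y / (1 - (norm z)^2)^2"
proof -
  have n0: "norm z \<ge> 0" by simp
  have r: "1 - (norm z)^2 \<noteq> 0"
  proof
    assume "1 - (norm z)^2 = 0"
    then have "norm z = 1 \<or> norm z = -1" using power2_eq_1_iff[of "norm z"] by simp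
    then show False using assms n0 by linarith
  qed
  have alg: "\<And>A B r::real. r \<noteq> 0 \<Longrightarrow> A / r + B / r^2 = (r * A + B) / r^2"
    by (simp add: field_simps power2_eq_square)
  show ?thesis unfolding kaehler_form_def bergman_g_alt kE_def by (rule alg[OF r])
qed

lemma kE_sphere: "norm z = 1 \<Longrightarrow> kE z X Y = Re (hA X z * hA z (\<i> *s Y))"
  unfolding kE_def by simp

lemma kE_sphere_Im: "norm q = 1 \<Longrightarrow> kE q X Y = Im (hA X q) * inner Y q - inner X q * Im (hA Y q)"
  unfolding kE_def
  by (simp add: hA_i hA_cnj[of q Y] Re_hA[symmetric])



lemma dim_range_inj:
  fixes L :: "'a::euclidean_space \<Rightarrow> 'b::euclidean_space"
  assumes "linear L" "inj L"
  shows "dim (range L) = DIM('a)"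
  using dim_image_eq[of L UNIV] assms by (simp add: inj_on_def dim_UNIV)

lemma cont_nbhd:
  fixes c :: "real \<Rightarrow> 'b::metric_space"
  assumes "continuous (at 0) c" "open V" "c 0 \<in> V"
  shows "\<exists>d>0. \<forall>t. \<bar>t\<bar> < d \<longrightarrow> c t \<in> V"
proof -
  obtain r where r: "r > 0" "ball (c 0) r \<subseteq> V" using assms(2,3) open_contains_ball by blast
  obtain d where d: "d > 0" "\<And>t. dist t 0 < d \<Longrightarrow> dist (c t) (c 0) < r"
    using assms(1) r(1) unfolding continuous_at_eps_delta by blast
  show ?thesis using d r by (intro exI[of _ d]) (auto simp: dist_commute subset_iff)
qed

lemma chart_line:
  fixes \<psi> :: "'a::euclidean_space \<Rightarrow> 'b::real_normed_vector"
  assumes "open D" "v0 \<in> D" "(\<psi> has_derivative L) (at v0)"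
  shows "\<exists>e>0. (\<forall>t. \<bar>t\<bar> < e \<longrightarrow> v0 + t *\<^sub>R a \<in> D) \<and>
           ((\<lambda>t. \<psi> (v0 + t *\<^sub>R a)) has_vector_derivative L a) (at 0)"
proof -
  have lc: "continuous (at 0) (\<lambda>t::real. v0 + t *\<^sub>R a)" by (intro continuous_intros)
  obtain e where e: "e > 0" "\<forall>t. \<bar>t\<bar> < e \<longrightarrow> v0 + t *\<^sub>R a \<in> D"
    using cont_nbhd[OF lc assms(1)] assms(2) by auto
  have ld: "((\<lambda>t::real. v0 + t *\<^sub>R a) has_derivative (\<lambda>h. h *\<^sub>R a)) (at 0)"
    by (auto intro!: derivative_eq_intros)
  have "((\<psi> \<circ> (\<lambda>t::real. v0 + t *\<^sub>R a)) has_derivative (L \<circ> (\<lambda>h. h *\<^sub>R a))) (at 0)"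
    by (rule diff_chain_at[OF ld]) (simp add: assms(3))
  moreover have "L \<circ> (\<lambda>h. h *\<^sub>R a) = (\<lambda>h. h *\<^sub>R L a)"
    using assms(3) has_derivative_linear[OF assms(3)] by (auto simp: o_def linear_scale)
  ultimately show ?thesis using e unfolding has_vector_derivative_def by (auto simp: o_def)
qed

lemma sphere_curve_orth:
  fixes \<gamma> :: "real \<Rightarrow> 'a::real_inner"
  assumes "e > 0" "\<forall>t. \<bar>t\<bar> < e \<longrightarrow> \<gamma> t \<in> sphere 0 1" "(\<gamma> has_vector_derivative v) (at 0)"
  shows "inner v (\<gamma> 0) = 0"
proof -
  have d1: "((\<lambda>t. inner (\<gamma> t) (\<gamma> t)) has_derivative (\<lambda>h. inner (\<gamma> 0) (h *\<^sub>R v) + inner (h *\<^sub>R v) (\<gamma> 0))) (at 0)"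
    using has_derivative_inner[OF assms(3)[unfolded has_vector_derivative_def] assms(3)[unfolded has_vector_derivative_def]] .
  have "((\<lambda>t::real. 1::real) has_derivative (\<lambda>h. 0)) (at 0)" by simp
  then have d2: "((\<lambda>t. inner (\<gamma> t) (\<gamma> t)) has_derivative (\<lambda>h. 0)) (at 0)"
  proof (rule has_derivative_transform_within_open[where s="ball 0 e"])
    show "open (ball (0::real) e)" by simp
    show "(0::real) \<in> ball 0 e" using assms(1) by simp
    fix t :: real assume "t \<in> ball 0 e"
    then have "norm (\<gamma> t) = 1" using assms(2) by auto
    then show "1 = inner (\<gamma> t) (\<gamma> t)" by (simp add: dot_square_norm)
  qed
  have eqf: "(\<lambda>h. inner (\<gamma> 0) (h *\<^sub>R v) + inner (h *\<^sub>R v) (\<gamma> 0)) = (\<lambda>h. 0)"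
    by (rule has_derivative_unique[OF d1 d2])
  have "inner (\<gamma> 0) v + inner v (\<gamma> 0) = 0" using fun_cong[OF eqf, of 1] by simp
  then show ?thesis using inner_commute[of "\<gamma> 0" v] by linarith
qed

lemma isom_facts:
  assumes F: "bergman_isom_biholo F" and p: "p \<in> ball 0 1"
  defines "dF \<equiv> frechet_derivative F (at p)"
  shows "(F has_derivative dF) (at p)" "inj dF" "linear dF"
    "kaehler_form (F p) (dF X) (dF Y) = kaehler_form p X Y"
proof -
  have dif: "F differentiable (at p)"
    and cx: "\<And>v. dF (\<i> *s v) = \<i> *s dF v"
    and iso: "\<And>v w. bergman_g (F p) (dF v) (dF w) = bergman_g p v w"
    using F p unfolding bergman_isom_biholo_def dF_def by auto
  show hd: "(F has_derivative dF) (at p)" using dif frechet_derivative_works dF_def by blast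
  show lin: "linear dF" using hd has_derivative_linear by blast
  have Fp: "F p \<in> ball 0 1" using F p unfolding bergman_isom_biholo_def bij_betw_def by auto
  show "inj dF"
  proof (rule linear_injective_0[OF lin, THEN iffD2], intro allI impI)
    fix v assume "dF v = 0"
    then have "bergman_g p v v = bergman_g (F p) 0 0" using iso[of v v] by simp
    also have "\<dots> = 0" unfolding bergman_g_alt hA_def by simp
    finally have "bergman_g p v v = 0" .
    then show "v = 0" using bergman_pos[of p v] p by force
  qed
  show "kaehler_form (F p) (dF X) (dF Y) = kaehler_form p X Y"
    unfolding kaehler_form_def cx[symmetric] by (rule iso)
qed



lemma curve_in_chart:
  fixes \<phi> :: "'a::euclidean_space \<Rightarrow> 'e::euclidean_space" and \<gamma> :: "real \<Rightarrow> 'e"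
  assumes der: "(\<phi> has_derivative L) (at u0)" and inj: "inj L" and u0: "u0 \<in> D"
    and injon: "inj_on \<phi> D"
    and cont: "continuous_on (\<phi> ` D) (inv_into D \<phi>)"
    and gd: "(\<gamma> has_vector_derivative v) (at 0)" and g0: "\<gamma> 0 = \<phi> u0"
    and e: "e > 0" and gin: "\<forall>t. \<bar>t\<bar> < e \<longrightarrow> \<gamma> t \<in> \<phi> ` D"
  shows "v \<in> range L"
proof -
  have lin: "linear L" using der has_derivative_linear by blast
  obtain c where c: "c>0" "\<And>x. c * norm x \<le> norm (L x)"
    using linear_inj_bounded_below_pos[OF lin inj] by blast
  define \<psi> where "\<psi> t = inv_into D \<phi> (\<gamma> t)" for t
  have \<psi>D: "\<psi> t \<in> D \<and> \<phi> (\<psi> t) = \<gamma> t" if "\<bar>t\<bar> < e" for t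
    using gin that unfolding \<psi>_def by (auto intro: inv_into_into f_inv_into_f)
  have \<psi>0: "\<psi> 0 = u0" using injon u0 g0 unfolding \<psi>_def by simp
  define S where "S = {-e<..<e}"
  have S0: "0 \<in> S" "open S" using e by (auto simp: S_def)
  have gc: "continuous (at 0 within S) \<gamma>"
    using has_derivative_continuous gd unfolding has_vector_derivative_def
    by (metis continuous_at_imp_continuous_at_within)
  have gS: "\<gamma> ` S \<subseteq> \<phi> ` D" using gin by (auto simp: S_def)
  have ic: "continuous (at (\<gamma> 0) within \<gamma> ` S) (inv_into D \<phi>)"
    using cont gS g0 u0 continuous_on_eq_continuous_within continuous_within_subset by blast
  have "continuous (at 0 within S) (inv_into D \<phi> \<circ> \<gamma>)"
    by (rule continuous_within_compose[OF gc ic])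
  then have "continuous (at 0) \<psi>" using S0 at_within_open[of 0 S]
    unfolding \<psi>_def[abs_def] by (simp add: o_def)
  then have \<psi>lim: "(\<psi> \<longlongrightarrow> u0) (at 0)" using \<psi>0 by (simp add: continuous_at)
  have rlim: "\<forall>\<epsilon>>0. \<exists>d>0. \<forall>y. norm (y - u0) < d \<longrightarrow> norm (\<phi> y - \<phi> u0 - L (y - u0)) \<le> \<epsilon> * norm (y - u0)"
    using der unfolding has_derivative_within_alt by auto
  have glim: "eventually (\<lambda>t. norm (\<gamma> t - \<gamma> 0 - t *\<^sub>R v) \<le> \<epsilon> * \<bar>t\<bar>) (at 0)" if "\<epsilon> > 0" for \<epsilon>
    using gd that unfolding has_vector_derivative_def has_derivative_within_alt2 by auto
  have ev_near: "eventually (\<lambda>t. norm (\<psi> t - u0) < d) (at 0)" if "d > 0" for d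
    using \<psi>lim that unfolding tendsto_iff dist_norm by auto
  have ev_e: "eventually (\<lambda>t. \<bar>t\<bar> < e) (at 0)"
    using e by (auto simp: eventually_at intro!: exI[of _ e])
  obtain d1 where d1: "d1 > 0" "\<And>y. norm (y - u0) < d1 \<Longrightarrow> norm (\<phi> y - \<phi> u0 - L (y - u0)) \<le> (c/2) * norm (y - u0)"
    using rlim c(1) by (meson half_gt_zero)
  define M where "M = 2 * (norm v + 1) / c"
  have M: "M > 0" using c(1) norm_ge_zero[of v] unfolding M_def by (intro divide_pos_pos) (auto simp: add_nonneg_pos)
  have bnd: "eventually (\<lambda>t. norm (\<psi> t - u0) \<le> M * \<bar>t\<bar>) (at 0)"
    using ev_near[OF d1(1)] ev_e glim[OF zero_less_one]
  proof eventually_elim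
    case (elim t)
    have "norm (\<gamma> t - \<gamma> 0) \<le> (norm v + 1) * \<bar>t\<bar>"
      using elim(3) norm_triangle_ineq2[of "\<gamma> t - \<gamma> 0" "t *\<^sub>R v"]
      by (auto simp: algebra_simps)
    moreover have "\<gamma> t - \<gamma> 0 = L (\<psi> t - u0) + (\<phi> (\<psi> t) - \<phi> u0 - L (\<psi> t - u0))"
      using \<psi>D[OF elim(2)] g0 by simp
    then have "norm (L (\<psi> t - u0)) \<le> norm (\<gamma> t - \<gamma> 0) + (c/2) * norm (\<psi> t - u0)"
      using d1(2)[OF elim(1)] norm_triangle_ineq4[of "\<gamma> t - \<gamma> 0" "\<phi> (\<psi> t) - \<phi> u0 - L (\<psi> t - u0)"]
      by (smt (verit, ccfv_threshold) add_diff_cancel_right' norm_triangle_ineq)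
    then have "c * norm (\<psi> t - u0) \<le> norm (\<gamma> t - \<gamma> 0) + (c/2) * norm (\<psi> t - u0)"
      using c(2)[of "\<psi> t - u0"] by linarith
    ultimately have "(c/2) * norm (\<psi> t - u0) \<le> (norm v + 1) * \<bar>t\<bar>" by linarith
    then show ?case using c(1) unfolding M_def by (simp add: field_simps)
  qed
  have conv: "((\<lambda>t. L ((1/t) *\<^sub>R (\<psi> t - u0))) \<longlongrightarrow> v) (at 0)"
    unfolding tendsto_iff
  proof (intro allI impI)
    fix \<epsilon> :: real assume \<epsilon>: "\<epsilon> > 0"
    obtain d2 where d2: "d2 > 0" "\<And>y. norm (y - u0) < d2 \<Longrightarrow> norm (\<phi> y - \<phi> u0 - L (y - u0)) \<le> (\<epsilon>/(4*M)) * norm (y - u0)"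
      using rlim \<epsilon> M by (metis divide_pos_pos mult_pos_pos zero_less_numeral)
    have g4: "eventually (\<lambda>t. norm (\<gamma> t - \<gamma> 0 - t *\<^sub>R v) \<le> (\<epsilon>/4) * \<bar>t\<bar>) (at 0)"
      by (rule glim) (use \<epsilon> in simp)
    have nz: "eventually (\<lambda>t::real. t \<noteq> 0) (at 0)" by (simp add: eventually_at_filter)
    show "eventually (\<lambda>t. dist (L ((1/t) *\<^sub>R (\<psi> t - u0))) v < \<epsilon>) (at 0)"
      using ev_near[OF d2(1)] ev_e g4 bnd nz
    proof eventually_elim
      case (elim t)
      have t0: "t \<noteq> 0" using elim(5) by auto
      have eq: "L (\<psi> t - u0) - t *\<^sub>R v = (\<gamma> t - \<gamma> 0 - t *\<^sub>R v) - (\<phi> (\<psi> t) - \<phi> u0 - L (\<psi> t - u0))"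
        using \<psi>D[OF elim(2)] g0 by simp
      have "norm (L (\<psi> t - u0) - t *\<^sub>R v) \<le> (\<epsilon>/4) * \<bar>t\<bar> + (\<epsilon>/(4*M)) * norm (\<psi> t - u0)"
        unfolding eq using elim(3) d2(2)[OF elim(1)] norm_triangle_ineq4 by (smt (verit) real_norm_def diff_zero)
      also have "\<dots> \<le> (\<epsilon>/4) * \<bar>t\<bar> + (\<epsilon>/(4*M)) * (M * \<bar>t\<bar>)"
        using elim(4) \<epsilon> M by (intro add_left_mono mult_left_mono) auto
      also have "\<dots> = (\<epsilon>/2) * \<bar>t\<bar>" using M by (simp add: field_simps)
      finally have *: "norm (L (\<psi> t - u0) - t *\<^sub>R v) \<le> (\<epsilon>/2) * \<bar>t\<bar>" .
      have "L ((1/t) *\<^sub>R (\<psi> t - u0)) - v = (1/t) *\<^sub>R (L (\<psi> t - u0) - t *\<^sub>R v)"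
        using t0 linear_scale[OF lin, of "1/t" "\<psi> t - u0"] by (simp add: scaleR_diff_right)
      then have "dist (L ((1/t) *\<^sub>R (\<psi> t - u0))) v = norm (L (\<psi> t - u0) - t *\<^sub>R v) / \<bar>t\<bar>"
        by (simp add: dist_norm divide_inverse_commute)
      also have "\<dots> \<le> \<epsilon>/2" using * t0 by (simp add: divide_le_eq)
      finally show ?case using \<epsilon> by linarith
    qed
  qed
  have "closed (range L)"
    by (rule closed_subspace) (simp add: lin linear_subspace_image)
  then show ?thesis
    by (rule Lim_in_closed_set[OF _ _ _ conv]) auto
qed


lemma pointwise:
  fixes \<Sigma> :: "(complex^'n) set" and \<phi> :: "real^'m \<Rightarrow> complex^'n"
  assumes F: "bergman_isom_biholo F" and sub: "\<Sigma> \<subseteq> ball 0 1"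
    and subm: "C1_submanifold TYPE('m) \<Sigma>" and iso: "isotropic \<Sigma>"
    and ch: "C1_chart S \<phi> \<phi>' D" and FS: "F ` \<Sigma> \<subseteq> S" and u: "u \<in> D" and pu: "\<phi> u \<in> F ` \<Sigma>"
  shows "kaehler_form (\<phi> u) (\<phi>' u a) (\<phi>' u b) = 0"
proof -
  obtain p where p: "p \<in> \<Sigma>" "\<phi> u = F p" using pu by auto
  have pb: "p \<in> ball 0 1" using p sub by auto
  obtain \<psi> :: "real^'m \<Rightarrow> complex^'n" and \<psi>' D' where D': "open D'" "C1_chart \<Sigma> \<psi> \<psi>' D'" "p \<in> \<psi> ` D'"
    using subm p(1) unfolding C1_submanifold_def by blast
  obtain v0 where v0: "v0 \<in> D'" "p = \<psi> v0" using D'(3) by auto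
  obtain W' where W': "open W'" "D' \<subseteq> W'" "\<forall>x\<in>W'. (\<psi> has_derivative blinfun_apply (\<psi>' x)) (at x)"
    using D'(2) unfolding C1_chart_def by blast
  have \<psi>d: "(\<psi> has_derivative blinfun_apply (\<psi>' v0)) (at v0)" using W' v0 by auto
  have \<psi>inj: "inj (blinfun_apply (\<psi>' v0))" using D'(2) v0 unfolding C1_chart_def by auto
  have \<psi>S: "\<psi> ` D' \<subseteq> \<Sigma>" using D'(2) unfolding C1_chart_def by auto
  obtain W where W: "open W" "D \<subseteq> W" "\<forall>x\<in>W. (\<phi> has_derivative blinfun_apply (\<phi>' x)) (at x)"
    using ch unfolding C1_chart_def by blast
  have \<phi>d: "(\<phi> has_derivative blinfun_apply (\<phi>' u)) (at u)" using W u by auto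
  have \<phi>inj: "inj (blinfun_apply (\<phi>' u))" "inj_on \<phi> D" "continuous_on (\<phi> ` D) (inv_into D \<phi>)"
    using ch u unfolding C1_chart_def by auto
  obtain V where V: "open V" "\<phi> ` D = S \<inter> V" using ch unfolding C1_chart_def by blast
  define dF where "dF = frechet_derivative F (at p)"
  have iF: "(F has_derivative dF) (at p)" "inj dF" "linear dF"
    "\<And>X Y. kaehler_form (F p) (dF X) (dF Y) = kaehler_form p X Y"
    using isom_facts[OF F pb] unfolding dF_def by auto
  define L where "L = dF \<circ> blinfun_apply (\<psi>' v0)"
  have lin\<psi>: "linear (blinfun_apply (\<psi>' v0))" using \<psi>d has_derivative_linear by blast
  have linL: "linear L" unfolding L_def using iF(3) lin\<psi> linear_compose by blast
  have injL: "inj L" unfolding L_def using iF(2) \<psi>inj inj_compose by blast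
  have incl: "range L \<subseteq> range (blinfun_apply (\<phi>' u))"
  proof
    fix y assume "y \<in> range L"
    then obtain c where y: "y = L c" by auto
    obtain e1 where e1: "e1 > 0" "\<forall>t. \<bar>t\<bar> < e1 \<longrightarrow> v0 + t *\<^sub>R c \<in> D'"
       and cd: "((\<lambda>t. \<psi> (v0 + t *\<^sub>R c)) has_vector_derivative blinfun_apply (\<psi>' v0) c) (at 0)"
      using chart_line[OF D'(1) v0(1) \<psi>d] by blast
    define cv where "cv t = F (\<psi> (v0 + t *\<^sub>R c))" for t
    have cvd: "(cv has_vector_derivative L c) (at 0)"
    proof -
      have "((F \<circ> (\<lambda>t. \<psi> (v0 + t *\<^sub>R c))) has_derivative (dF \<circ> (\<lambda>h. h *\<^sub>R blinfun_apply (\<psi>' v0) c))) (at 0)"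
        by (rule diff_chain_at[OF cd[unfolded has_vector_derivative_def]]) (simp add: v0(2)[symmetric] iF(1))
      moreover have "dF \<circ> (\<lambda>h. h *\<^sub>R blinfun_apply (\<psi>' v0) c) = (\<lambda>h. h *\<^sub>R L c)"
        using iF(3) by (auto simp: L_def o_def linear_scale)
      ultimately show ?thesis unfolding has_vector_derivative_def cv_def[abs_def] by (simp add: o_def)
    qed
    have cv0: "cv 0 = \<phi> u" using p v0 by (simp add: cv_def)
    have uV: "\<phi> u \<in> V" using V(2) u by auto
    have "continuous (at 0) cv" using cvd has_vector_derivative_continuous by blast
    then obtain e2 where e2: "e2 > 0" "\<forall>t. \<bar>t\<bar> < e2 \<longrightarrow> cv t \<in> V"
      using cont_nbhd[of cv V] V(1) cv0 uV by auto
    have cin: "\<forall>t. \<bar>t\<bar> < min e1 e2 \<longrightarrow> cv t \<in> \<phi> ` D"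
    proof (intro allI impI)
      fix t :: real assume t: "\<bar>t\<bar> < min e1 e2"
      then have "\<psi> (v0 + t *\<^sub>R c) \<in> \<Sigma>" using e1 \<psi>S by auto
      then have "cv t \<in> S" using FS by (auto simp: cv_def)
      then show "cv t \<in> \<phi> ` D" using e2 t V(2) by auto
    qed
    show "y \<in> range (blinfun_apply (\<phi>' u))"
      using curve_in_chart[OF \<phi>d \<phi>inj(1) u \<phi>inj(2) \<phi>inj(3) cvd, of "min e1 e2"] cin cv0 e1 e2 y by auto
  qed
  have lin\<phi>: "linear (blinfun_apply (\<phi>' u))" using \<phi>d has_derivative_linear by blast
  have eq: "range L = range (blinfun_apply (\<phi>' u))"
  proof (rule subspace_dim_equal)
    show "subspace (range L)" by (simp add: linL linear_subspace_image)
    show "subspace (range (blinfun_apply (\<phi>' u)))" by (simp add: lin\<phi> linear_subspace_image)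
    show "range L \<subseteq> range (blinfun_apply (\<phi>' u))" by (rule incl)
    show "dim (range (blinfun_apply (\<phi>' u))) \<le> dim (range L)"
      using dim_range_inj[OF linL injL] dim_range_inj[OF lin\<phi> \<phi>inj(1)] by simp
  qed
  have tang: "blinfun_apply (\<psi>' v0) c \<in> tangent_space \<Sigma> p" for c
  proof -
    obtain e1 where e1: "e1 > 0" "\<forall>t. \<bar>t\<bar> < e1 \<longrightarrow> v0 + t *\<^sub>R c \<in> D'"
       and cd: "((\<lambda>t. \<psi> (v0 + t *\<^sub>R c)) has_vector_derivative blinfun_apply (\<psi>' v0) c) (at 0)"
      using chart_line[OF D'(1) v0(1) \<psi>d] by blast
    show ?thesis unfolding tangent_space_def
      using e1 cd \<psi>S v0(2) by (intro CollectI exI[of _ "\<lambda>t. \<psi> (v0 + t *\<^sub>R c)"] exI[of _ e1]) auto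
  qed
  obtain a' where a': "blinfun_apply (\<phi>' u) a = L a'" using eq by (metis rangeE rangeI)
  obtain b' where b': "blinfun_apply (\<phi>' u) b = L b'" using eq by (metis rangeE rangeI)
  have "kaehler_form (\<phi> u) (\<phi>' u a) (\<phi>' u b) = kaehler_form p (\<psi>' v0 a') (\<psi>' v0 b')"
    using a' b' p(2) iF(4) by (simp add: L_def)
  also have "\<dots> = 0" using iso p(1) tang unfolding isotropic_def by blast
  finally show ?thesis .
qed

lemma limit_key:
  fixes \<Sigma> :: "(complex^'n) set" and \<phi> :: "real^'m \<Rightarrow> complex^'n"
  assumes F: "bergman_isom_biholo F" and sub: "\<Sigma> \<subseteq> ball 0 1"
    and subm: "C1_submanifold TYPE('m) \<Sigma>" and iso: "isotropic \<Sigma>"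
    and ch: "C1_chart S \<phi> \<phi>' D" and FS: "F ` \<Sigma> \<subseteq> S" and FSb: "F ` \<Sigma> \<subseteq> ball 0 1"
    and u0: "u0 \<in> D" and q: "\<phi> u0 = q" and qc: "q \<in> closure (F ` \<Sigma>)"
  shows "kE q (\<phi>' u0 a) (\<phi>' u0 b) = 0"
proof -
  obtain W where W: "open W" "D \<subseteq> W" "continuous_on W \<phi>'"
    using ch unfolding C1_chart_def by blast
  have injon: "inj_on \<phi> D" and cont: "continuous_on (\<phi> ` D) (inv_into D \<phi>)"
    using ch unfolding C1_chart_def by auto
  obtain V where V: "open V" "\<phi> ` D = S \<inter> V" using ch unfolding C1_chart_def by blast
  have qV: "q \<in> V" using V(2) u0 q by auto
  obtain y where y: "\<forall>n. y n \<in> F ` \<Sigma>" "y \<longlonglongrightarrow> q" using qc closure_sequential by blast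
  have evV: "eventually (\<lambda>n. y n \<in> V) sequentially"
    using y(2) V(1) qV by (rule topological_tendstoD)
  have evD: "eventually (\<lambda>n. y n \<in> \<phi> ` D) sequentially"
    using evV proof eventually_elim
    case (elim n) then show ?case using y(1) FS V(2) by auto
  qed
  define un where "un n = inv_into D \<phi> (y n)" for n
  have qD: "q \<in> \<phi> ` D" using u0 q by auto
  have ca: "continuous (at q within \<phi> ` D) (inv_into D \<phi>)"
    using cont qD continuous_on_eq_continuous_within by blast
  have "((\<lambda>n. inv_into D \<phi> (y n)) \<longlongrightarrow> inv_into D \<phi> q) sequentially"
    by (rule continuous_within_tendsto_compose[OF ca evD y(2)])
  moreover have "inv_into D \<phi> q = u0" using injon u0 q by (metis inv_into_f_f)
  ultimately have unlim: "un \<longlonglongrightarrow> u0" by (simp add: un_def[abs_def])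
  have ev0: "eventually (\<lambda>n. kE (y n) (\<phi>' (un n) a) (\<phi>' (un n) b) = 0) sequentially"
    using evD proof eventually_elim
    case (elim n)
    have unD: "un n \<in> D" and yn: "\<phi> (un n) = y n"
      using elim by (auto simp: un_def inv_into_into f_inv_into_f)
    have k0: "kaehler_form (\<phi> (un n)) (\<phi>' (un n) a) (\<phi>' (un n) b) = 0"
      by (rule pointwise[OF F sub subm iso ch FS unD]) (use yn y(1) in auto)
    have "y n \<in> ball 0 1" using y(1) FSb by blast
    then have "norm (y n) < 1" by simp
    then have sq: "(norm (y n))^2 < 1^2" by (intro power_strict_mono) auto
    have nz: "norm (y n) \<noteq> 1" "(1 - (norm (y n))^2)^2 \<noteq> 0"
      using \<open>norm (y n) < 1\<close> sq by auto
    show ?case using k0 kaehler_kE[OF nz(1)] nz(2) yn by simp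
  qed
  have u0W: "u0 \<in> W" using u0 W(2) by auto
  have "isCont \<phi>' u0" using W(1,3) u0W continuous_on_eq_continuous_at by blast
  then have \<phi>'lim: "(\<lambda>n. \<phi>' (un n)) \<longlonglongrightarrow> \<phi>' u0" using unlim isCont_tendsto_compose by blast
  have Xl: "(\<lambda>n. blinfun_apply (\<phi>' (un n)) c) \<longlonglongrightarrow> blinfun_apply (\<phi>' u0) c" for c
    by (rule bounded_bilinear.tendsto[OF bounded_bilinear_blinfun_apply \<phi>'lim tendsto_const])
  have El: "(\<lambda>n. kE (y n) (\<phi>' (un n) a) (\<phi>' (un n) b)) \<longlonglongrightarrow> kE q (\<phi>' u0 a) (\<phi>' u0 b)"
    unfolding kE_def hA_i unfolding hA_def by (intro tendsto_intros y(2) Xl \<phi>'lim)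
  have "(\<lambda>n. 0::real) \<longlonglongrightarrow> kE q (\<phi>' u0 a) (\<phi>' u0 b)"
    by (rule Lim_transform_eventually[OF El ev0])
  then show ?thesis using LIMSEQ_const_iff by metis
qed

theorem lemma3p2:
  fixes \<Sigma> :: "(complex^'n) set"
  assumes "\<Sigma> \<subseteq> ball 0 1"
    and "C1_submanifold TYPE('m::finite) \<Sigma>"
    and "asymptotically_regular TYPE('m) \<Sigma>"
    and "CARD('m) \<ge> 2"
    and "isotropic \<Sigma>"
  shows "asymptotically_horizontal TYPE('m) \<Sigma>"
proof -
  obtain F where F: "bergman_isom_biholo F" and R: "asymp_regular_via TYPE('m) F \<Sigma>"
    using assms(3) unfolding asymptotically_regular_def by blast
  define S where "S = compactified F \<Sigma>"
  have Sbd: "manifold_boundary TYPE('m) S = S \<inter> sphere 0 1"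
    using R unfolding asymp_regular_via_def S_def Let_def by auto
  have trans: "\<And>(\<phi>::real^'m \<Rightarrow> complex^'n) \<phi>' D k u. bd_chart S \<phi> \<phi>' D k \<Longrightarrow> u \<in> D \<Longrightarrow>
      \<phi> u \<in> sphere 0 1 \<Longrightarrow> \<exists>w. blinfun_apply (\<phi>' u) w \<bullet> \<phi> u \<noteq> 0"
    using R unfolding asymp_regular_via_def S_def Let_def by blast
  have FS: "F ` \<Sigma> \<subseteq> S" unfolding S_def compactified_def by (rule closure_subset)
  have FSb: "F ` \<Sigma> \<subseteq> ball 0 1"
    using F assms(1) unfolding bergman_isom_biholo_def bij_betw_def by auto
  have hor: "horizontal (manifold_boundary TYPE('m) S)"
    unfolding horizontal_def
  proof (intro conjI ballI)
    show "manifold_boundary TYPE('m) S \<subseteq> sphere 0 1" using Sbd by auto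
    fix q v assume q: "q \<in> manifold_boundary TYPE('m) S"
      and v: "v \<in> tangent_space (manifold_boundary TYPE('m) S) q"
    obtain \<phi> :: "real^'m \<Rightarrow> complex^'n" and \<phi>' D k u0 where
      bc: "bd_chart S \<phi> \<phi>' D k" "u0 \<in> D" "\<phi> u0 = q"
      using q unfolding manifold_boundary_def by blast
    have ch: "C1_chart S \<phi> \<phi>' D" using bc(1) unfolding bd_chart_def by blast
    obtain W where W: "open W" "D \<subseteq> W" "\<forall>x\<in>W. (\<phi> has_derivative blinfun_apply (\<phi>' x)) (at x)"
      using ch unfolding C1_chart_def by blast
    have \<phi>d: "(\<phi> has_derivative blinfun_apply (\<phi>' u0)) (at u0)" using W bc(2) by auto
    have \<phi>inj: "inj (blinfun_apply (\<phi>' u0))" "inj_on \<phi> D" "continuous_on (\<phi> ` D) (inv_into D \<phi>)"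
      using ch bc(2) unfolding C1_chart_def by auto
    obtain V where V: "open V" "\<phi> ` D = S \<inter> V" using ch unfolding C1_chart_def by blast
    have qs: "q \<in> sphere 0 1" "q \<in> S" using q Sbd by auto
    have nq: "norm q = 1" using qs by simp
    have qV: "q \<in> V" using V(2) bc by auto
    obtain \<gamma> e where \<gamma>: "0 < e" "\<gamma> 0 = q" "\<forall>t. \<bar>t\<bar> < e \<longrightarrow> \<gamma> t \<in> manifold_boundary TYPE('m) S"
        "(\<gamma> has_vector_derivative v) (at 0)"
      using v unfolding tangent_space_def by blast
    have orth: "inner v q = 0"
      using sphere_curve_orth[of e \<gamma> v] \<gamma> Sbd by auto
    have "continuous (at 0) \<gamma>" using \<gamma>(4) has_vector_derivative_continuous by blast
    then obtain e2 where e2: "e2 > 0" "\<forall>t. \<bar>t\<bar> < e2 \<longrightarrow> \<gamma> t \<in> V"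
      using cont_nbhd[of \<gamma> V] V(1) \<gamma>(2) qV by auto
    have cin: "\<forall>t. \<bar>t\<bar> < min e e2 \<longrightarrow> \<gamma> t \<in> \<phi> ` D"
      using \<gamma>(3) e2 Sbd V(2) by auto
    have vr: "v \<in> range (blinfun_apply (\<phi>' u0))"
      using curve_in_chart[OF \<phi>d \<phi>inj(1) bc(2) \<phi>inj(2) \<phi>inj(3) \<gamma>(4), of "min e e2"] cin \<gamma>(1,2) e2(1) bc(3) by auto
    obtain w where w: "inner (blinfun_apply (\<phi>' u0) w) q \<noteq> 0"
      using trans[OF bc(1) bc(2)] bc(3) qs by auto
    obtain a where a: "v = blinfun_apply (\<phi>' u0) a" using vr by auto
    have qc: "q \<in> closure (F ` \<Sigma>)" using qs(2) unfolding S_def compactified_def .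
    have "kE q (\<phi>' u0 a) (\<phi>' u0 w) = 0"
      by (rule limit_key[OF F assms(1) assms(2) assms(5) ch FS FSb bc(2) bc(3) qc])
    then have "Im (hA v q) * inner (blinfun_apply (\<phi>' u0) w) q = 0"
      using kE_sphere_Im[OF nq] orth a by simp
    then have "Im (hA v q) = 0" using w by simp
    then show "theta q v = 0" using theta_hA[OF nq] by simp
  qed
  show ?thesis unfolding asymptotically_horizontal_def
    using F R hor unfolding S_def by blast
qed

end
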